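(* Let $P$ be a positive event pattern and $I$ an event stream. Run the following algorithm: set $V := \emptyset$ and $final\_count := 0$; process the events of $I$ one at a time in nondecreasing order of time; for an event $e$ of type $E$, let $Pr := \{p \in V : p.type \in predTypes(E),\ p.time < e.time\}$; if $E = start(P)$ or $Pr \neq \emptyset$, then add $e$ to $V$, set $e.count := [E = start(P)] + \sum_{p \in Pr} p.count$ (where $[\cdot]$ is $1$ if true and $0$ otherwise), and, if $E = end(P)$, increase $final\_count$ by $e.count$; finally return $final\_count$. Then for every event $e$ added to $V$, $e.count$ equals the number of sequences $(e_1,\dots,e_m)$, $m\ge 1$, of events of $I$ with $e_m = e$, $e_1.type = start(P)$, $e_1.time < e_2.time < \dots < e_m.time$ and $e_l.type \in predTypes(e_{l+1}.type)$ for all $1 \le l < m$ (i.e., the number of sub-trends from a START event to $e$ in the GRETA graph), and the returned value $final\_count$ equals the number of event trends matched by $P$ in $I$.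
   Context: Events: each event $e$ has an event type $e.type$ and an occurrence time $e.time \in \mathbb{Q}_{\ge 0}$. An event stream $I$ is a finite collection of distinct events arriving in nondecreasing order of time. Positive patterns: an event type $E$ is a pattern; if $P_i,P_j$ are patterns then $P_i+$ and $\mathsf{SEQ}(P_i,P_j)$ are patterns; each event type occurs at most once in a pattern. Matches over $I$: $matches(E)=\{(e): e\in I, e.type=E\}$; $(e_1,\dots,e_k)\in matches(\mathsf{SEQ}(P_i,P_j))$ iff for some $1\le m\le k$, $(e_1,\dots,e_m)\in matches(P_i)$, $(e_{m+1},\dots,e_k)\in matches(P_j)$ and $e_1.time<\dots<e_k.time$; $matches(P_i+)$ consists of concatenations $s_1\cdots s_k$ ($k\ge1$) with each $s_l\in matches(P_i)$ and the last event of $s_l$ strictly earlier than the first event of $s_{l+1}$. Event trends matched by $P$ in $I$ are the elements of $matches(P)$. Define $start(E)=end(E)=E$, $start(P_i+)=start(P_i)$, $end(P_i+)=end(P_i)$, $start(\mathsf{SEQ}(P_i,P_j))=start(P_i)$, $end(\mathsf{SEQ}(P_i,P_j))=end(P_j)$. GRETA template of $P$: its states are the event types in $P$; for every sub-pattern $\mathsf{SEQ}(P_i,P_j)$ of $P$ there is a transition from $end(P_i)$ to $start(P_j)$, and for every sub-pattern $P_i+$ of $P$ there is a transition from $end(P_i)$ to $start(P_i)$. For an event type $E$, $predTypes(E)$ is the set of event types $E'$ such that the template has a transition from $E'$ to $E$. *)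

theory Defs
  imports Main "HOL.Rat"
begin

text \<open>Events are elements of an abstract type 'e, with a type function
  ety :: 'e => 't and an occurrence-time function tm :: 'e => rat.
  An event stream is a list of distinct events, sorted by time.\<close>

datatype 't pat = Atom 't | Plus "'t pat" | Seq "'t pat" "'t pat"

fun pat_types :: "'t pat \<Rightarrow> 't list" where
  "pat_types (Atom E) = [E]"
| "pat_types (Plus P) = pat_types P"
| "pat_types (Seq P Q) = pat_types P @ pat_types Q"

definition wf_pat :: "'t pat \<Rightarrow> bool" where
  "wf_pat P \<longleftrightarrow> distinct (pat_types P)"

fun pstart :: "'t pat \<Rightarrow> 't" where
  "pstart (Atom E) = E"
| "pstart (Plus P) = pstart P"
| "pstart (Seq P Q) = pstart P"

fun pend :: "'t pat \<Rightarrow> 't" where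
  "pend (Atom E) = E"
| "pend (Plus P) = pend P"
| "pend (Seq P Q) = pend Q"

fun trans_of :: "'t pat \<Rightarrow> ('t \<times> 't) set" where
  "trans_of (Atom E) = {}"
| "trans_of (Plus P) = insert (pend P, pstart P) (trans_of P)"
| "trans_of (Seq P Q) = insert (pend P, pstart Q) (trans_of P \<union> trans_of Q)"

definition predTypes :: "'t pat \<Rightarrow> 't \<Rightarrow> 't set" where
  "predTypes P E = {E'. (E', E) \<in> trans_of P}"

inductive_set plus_cl :: "('e \<Rightarrow> rat) \<Rightarrow> 'e list set \<Rightarrow> 'e list set"
  for tm :: "'e \<Rightarrow> rat" and M :: "'e list set" where
  base: "s \<in> M \<Longrightarrow> s \<in> plus_cl tm M"
| step: "s \<in> M \<Longrightarrow> t \<in> plus_cl tm M \<Longrightarrow> tm (last s) < tm (hd t) \<Longrightarrow> s @ t \<in> plus_cl tm M"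

fun matches :: "('e \<Rightarrow> 't) \<Rightarrow> ('e \<Rightarrow> rat) \<Rightarrow> 'e list \<Rightarrow> 't pat \<Rightarrow> 'e list set" where
  "matches ety tm I (Atom E) = {[e] | e. e \<in> set I \<and> ety e = E}"
| "matches ety tm I (Seq P Q) =
     {xs @ ys | xs ys. xs \<in> matches ety tm I P \<and> ys \<in> matches ety tm I Q
                      \<and> sorted_wrt (\<lambda>a b. tm a < tm b) (xs @ ys)}"
| "matches ety tm I (Plus P) = plus_cl tm (matches ety tm I P)"

definition event_stream :: "('e \<Rightarrow> rat) \<Rightarrow> 'e list \<Rightarrow> bool" where
  "event_stream tm I \<longleftrightarrow> distinct I \<and> sorted (map tm I) \<and> (\<forall>e\<in>set I. 0 \<le> tm e)"

definition alg_step :: "('e \<Rightarrow> 't) \<Rightarrow> ('e \<Rightarrow> rat) \<Rightarrow> 't pat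
    \<Rightarrow> 'e set \<times> ('e \<Rightarrow> nat) \<times> nat \<Rightarrow> 'e \<Rightarrow> 'e set \<times> ('e \<Rightarrow> nat) \<times> nat" where
  "alg_step ety tm P st e =
    (case st of (V, cnt, fc) \<Rightarrow>
      (let E = ety e;
           Pr = {p \<in> V. ety p \<in> predTypes P E \<and> tm p < tm e}
       in if E = pstart P \<or> Pr \<noteq> {} then
            (let c = (if E = pstart P then 1 else 0) + (\<Sum>p\<in>Pr. cnt p)
             in (insert e V, cnt(e := c), if E = pend P then fc + c else fc))
          else (V, cnt, fc)))"

definition run_alg :: "('e \<Rightarrow> 't) \<Rightarrow> ('e \<Rightarrow> rat) \<Rightarrow> 't pat \<Rightarrow> 'e list
    \<Rightarrow> 'e set \<times> ('e \<Rightarrow> nat) \<times> nat" where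
  "run_alg ety tm P I = foldl (alg_step ety tm P) ({}, (\<lambda>_. 0), 0) I"

definition subtrends :: "('e \<Rightarrow> 't) \<Rightarrow> ('e \<Rightarrow> rat) \<Rightarrow> 't pat \<Rightarrow> 'e list \<Rightarrow> 'e \<Rightarrow> 'e list set" where
  "subtrends ety tm P I e = {s. s \<noteq> [] \<and> set s \<subseteq> set I \<and> last s = e \<and> ety (hd s) = pstart P
      \<and> sorted_wrt (\<lambda>a b. tm a < tm b) s
      \<and> (\<forall>l. l + 1 < length s \<longrightarrow> ety (s ! l) \<in> predTypes P (ety (s ! (l + 1))))}"

end

theory Submission
  imports Defs
begin

definition paths :: "('e \<Rightarrow> 't) \<Rightarrow> ('e \<Rightarrow> rat) \<Rightarrow> 'e list \<Rightarrow> 't pat \<Rightarrow> 'e list set" where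
"paths ety tm I P = {s. s \<noteq> [] \<and> set s \<subseteq> set I \<and> sorted_wrt (\<lambda>a b. tm a < tm b) s
   \<and> ety (hd s) = pstart P \<and> ety (last s) = pend P
   \<and> successively (\<lambda>a b. (ety a, ety b) \<in> trans_of P) s}"

lemma start_in: "pstart P \<in> set (pat_types P)" by (induction P) auto
lemma end_in: "pend P \<in> set (pat_types P)" by (induction P) auto

lemma trans_types: "trans_of P \<subseteq> set (pat_types P) \<times> set (pat_types P)"
  by (induction P) (auto simp: start_in end_in)

lemma sorted_le_last: "sorted_wrt (\<lambda>a b. (tm a::rat) < tm b) s \<Longrightarrow> x \<in> set s \<Longrightarrow> tm x \<le> tm (last s)"
proof (induction s)
  case (Cons a s)
  show ?case
  proof (cases "s = []")
    case False
    then have "last s \<in> set s" by simp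
    then show ?thesis using Cons False by (auto intro: less_imp_le)
  qed (use Cons in auto)
qed simp

lemma sorted_hd_le: "sorted_wrt (\<lambda>a b. (tm a::rat) < tm b) s \<Longrightarrow> x \<in> set s \<Longrightarrow> tm (hd s) \<le> tm x"
  by (induction s) (auto intro: less_imp_le)

lemma succ_stay:
  assumes "successively R s" "\<And>a b. R a b \<Longrightarrow> a \<in> S \<Longrightarrow> b \<in> S" "s \<noteq> []" "hd s \<in> S"
  shows "\<forall>x\<in>set s. x \<in> S"
  using assms
proof (induction s)
  case (Cons a s)
  have aS: "a \<in> S" using Cons.prems(4) by simp
  show ?case
  proof (cases "s = []")
    case True then show ?thesis using aS by simp
  next
    case False
    then obtain b s' where bs: "s = b # s'" by (cases s) auto
    have Rab: "R a b" and ss: "successively R s" using Cons.prems(1) bs by auto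
    have bS: "b \<in> S" using Cons.prems(2)[OF Rab aS] .
    have "\<forall>x\<in>set s. x \<in> S" using Cons.IH[OF ss Cons.prems(2) False] bs bS by simp
    then show ?thesis using aS by simp
  qed
qed simp

lemma succ_split:
  assumes "successively (\<lambda>x y. R x y \<or> Q x y) s" "\<not> successively R s"
  shows "\<exists>xs ys. s = xs @ ys \<and> xs \<noteq> [] \<and> ys \<noteq> [] \<and> successively R xs \<and> Q (last xs) (hd ys)
      \<and> successively (\<lambda>x y. R x y \<or> Q x y) ys"
  using assms
proof (induction s)
  case Nil then show ?case by simp
next
  case (Cons x s)
  show ?case
  proof (cases s)
    case Nil then show ?thesis using Cons by simp
  next
    case (Cons y s'')
    show ?thesis
    proof (cases "R x y")
      case False
      then show ?thesis using Cons.prems \<open>s = y # s''\<close>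
        by (intro exI[of _ "[x]"] exI[of _ s]) auto
    next
      case True
      then have "\<not> successively R s" "successively (\<lambda>x y. R x y \<or> Q x y) s"
        using Cons.prems \<open>s = y # s''\<close> by auto
      then obtain xs ys where h: "s = xs @ ys" "xs \<noteq> []" "ys \<noteq> []" "successively R xs"
         "Q (last xs) (hd ys)" "successively (\<lambda>x y. R x y \<or> Q x y) ys" using Cons.IH by blast
      have "hd xs = y" using h \<open>s = y # s''\<close> by (cases xs) auto
      then show ?thesis using h True
        by (intro exI[of _ "x # xs"] exI[of _ ys]) (auto simp: successively_Cons)
    qed
  qed
qed

lemma paths_Atom: "paths ety tm I (Atom E) = {[e] | e. e \<in> set I \<and> ety e = E}"
proof (intro set_eqI iffI)
  fix s assume "s \<in> paths ety tm I (Atom E)"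
  then show "s \<in> {[e] | e. e \<in> set I \<and> ety e = E}"
    unfolding paths_def by (cases s) (auto simp: successively_Cons)
qed (auto simp: paths_def)

lemma plus_cl_sub: "s \<in> plus_cl tm (paths ety tm I P) \<Longrightarrow> s \<in> paths ety tm I (Plus P)"
proof (induction s rule: plus_cl.induct)
  case (base s)
  then show ?case unfolding paths_def by (auto elim: successively_mono)
next
  case (step s t)
  have s: "s \<noteq> []" "set s \<subseteq> set I" "sorted_wrt (\<lambda>a b. tm a < tm b) s" "ety (hd s) = pstart P"
    "ety (last s) = pend P" "successively (\<lambda>a b. (ety a, ety b) \<in> trans_of P) s"
    using step(1) unfolding paths_def by auto
  have t: "t \<noteq> []" "set t \<subseteq> set I" "sorted_wrt (\<lambda>a b. tm a < tm b) t" "ety (hd t) = pstart P"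
    "ety (last t) = pend P" "successively (\<lambda>a b. (ety a, ety b) \<in> trans_of (Plus P)) t"
    using step.IH unfolding paths_def by auto
  have lt: "tm x < tm y" if "x \<in> set s" "y \<in> set t" for x y
  proof -
    have "tm x \<le> tm (last s)" using sorted_le_last[OF s(3) that(1)] .
    moreover have "tm (hd t) \<le> tm y" using sorted_hd_le[OF t(3) that(2)] .
    moreover have "tm (last s) < tm (hd t)" using step by blast
    ultimately show ?thesis by linarith
  qed
  have "successively (\<lambda>a b. (ety a, ety b) \<in> trans_of (Plus P)) (s @ t)"
    using s(1,5,6) t(1,4,6) by (auto simp: successively_append_iff elim: successively_mono)
  then show ?case using s t lt unfolding paths_def by (auto simp: sorted_wrt_append)
qed

lemma plus_cl_sup: "s \<in> paths ety tm I (Plus P) \<Longrightarrow> s \<in> plus_cl tm (paths ety tm I P)"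
proof (induction "length s" arbitrary: s rule: less_induct)
  case less
  have s: "s \<noteq> []" "set s \<subseteq> set I" "sorted_wrt (\<lambda>a b. tm a < tm b) s" "ety (hd s) = pstart P"
    "ety (last s) = pend P" "successively (\<lambda>a b. (ety a, ety b) \<in> trans_of (Plus P)) s"
    using less(2) unfolding paths_def by auto
  show ?case
  proof (cases "successively (\<lambda>a b. (ety a, ety b) \<in> trans_of P) s")
    case True
    then show ?thesis using s by (intro plus_cl.base) (auto simp: paths_def)
  next
    case False
    have "successively (\<lambda>a b. (ety a, ety b) \<in> trans_of P \<or> (ety a = pend P \<and> ety b = pstart P)) s"
      using s(6) by (auto elim: successively_mono)
    from succ_split[OF this False] obtain xs ys where h: "s = xs @ ys" "xs \<noteq> []" "ys \<noteq> []"
      "successively (\<lambda>a b. (ety a, ety b) \<in> trans_of P) xs" "ety (last xs) = pend P" "ety (hd ys) = pstart P"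
      "successively (\<lambda>a b. (ety a, ety b) \<in> trans_of P \<or> (ety a = pend P \<and> ety b = pstart P)) ys"
      by blast
    have sw: "sorted_wrt (\<lambda>a b. tm a < tm b) xs" "sorted_wrt (\<lambda>a b. tm a < tm b) ys"
      "\<forall>x\<in>set xs. \<forall>y\<in>set ys. tm x < tm y"
      using s(3) h(1) by (auto simp: sorted_wrt_append)
    have xs: "xs \<in> paths ety tm I P" using h s sw unfolding paths_def by auto
    have "ys \<in> paths ety tm I (Plus P)" using h s sw unfolding paths_def
      by (auto elim: successively_mono)
    then have ys: "ys \<in> plus_cl tm (paths ety tm I P)" using less(1) h by simp
    have "tm (last xs) < tm (hd ys)" using sw(3) h(2,3) by simp
    then show ?thesis using plus_cl.step[OF xs ys] h(1) by simp
  qed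
qed

lemma paths_Seq:
  assumes disj: "set (pat_types P) \<inter> set (pat_types Q) = {}"
  shows "paths ety tm I (Seq P Q) = {xs @ ys | xs ys. xs \<in> paths ety tm I P \<and> ys \<in> paths ety tm I Q
                      \<and> sorted_wrt (\<lambda>a b. tm a < tm b) (xs @ ys)}"
proof (intro set_eqI iffI)
  fix s assume "s \<in> {xs @ ys | xs ys. xs \<in> paths ety tm I P \<and> ys \<in> paths ety tm I Q
                      \<and> sorted_wrt (\<lambda>a b. tm a < tm b) (xs @ ys)}"
  then obtain xs ys where h: "s = xs @ ys" "xs \<in> paths ety tm I P" "ys \<in> paths ety tm I Q"
    "sorted_wrt (\<lambda>a b. tm a < tm b) (xs @ ys)" by blast
  have "successively (\<lambda>a b. (ety a, ety b) \<in> trans_of (Seq P Q)) (xs @ ys)"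
    using h(2,3) unfolding paths_def by (auto simp: successively_append_iff elim: successively_mono)
  then show "s \<in> paths ety tm I (Seq P Q)" using h unfolding paths_def by auto
next
  fix s assume "s \<in> paths ety tm I (Seq P Q)"
  then have s: "s \<noteq> []" "set s \<subseteq> set I" "sorted_wrt (\<lambda>a b. tm a < tm b) s" "ety (hd s) = pstart P"
    "ety (last s) = pend Q" "successively (\<lambda>a b. (ety a, ety b) \<in> trans_of (Seq P Q)) s"
    unfolding paths_def by auto
  define TP where "TP = set (pat_types P)"
  define TQ where "TQ = set (pat_types Q)"
  have tP: "trans_of P \<subseteq> TP \<times> TP" and tQ: "trans_of Q \<subseteq> TQ \<times> TQ"
    using trans_types TP_def TQ_def by auto
  have sP: "pstart P \<in> TP" "pend P \<in> TP" and sQ: "pstart Q \<in> TQ" "pend Q \<in> TQ"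
    using start_in end_in TP_def TQ_def by auto
  have dj: "TP \<inter> TQ = {}" using disj TP_def TQ_def by simp
  define xs where "xs = takeWhile (\<lambda>a. ety a \<in> TP) s"
  define ys where "ys = dropWhile (\<lambda>a. ety a \<in> TP) s"
  have sxy: "s = xs @ ys" unfolding xs_def ys_def by simp
  have xne: "xs \<noteq> []" using s(1,4) sP unfolding xs_def by (cases s) auto
  have yne: "ys \<noteq> []"
  proof
    assume "ys = []"
    then have "\<forall>x\<in>set s. ety x \<in> TP" unfolding ys_def by (simp add: dropWhile_eq_Nil_conv)
    then have "pend Q \<in> TP" using s(1,5) last_in_set by metis
    then show False using sQ dj by blast
  qed
  have xsP: "\<forall>x\<in>set xs. ety x \<in> TP" unfolding xs_def by (auto dest: set_takeWhileD)
  have hy: "ety (hd ys) \<notin> TP" using yne unfolding ys_def using hd_dropWhile by metis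
  have sw: "sorted_wrt (\<lambda>a b. tm a < tm b) xs" "sorted_wrt (\<lambda>a b. tm a < tm b) ys"
    using s(3) sxy by (auto simp: sorted_wrt_append)
  have sc: "successively (\<lambda>a b. (ety a, ety b) \<in> trans_of (Seq P Q)) xs"
     "successively (\<lambda>a b. (ety a, ety b) \<in> trans_of (Seq P Q)) ys"
     "(ety (last xs), ety (hd ys)) \<in> trans_of (Seq P Q)"
    using s(6) sxy xne yne by (auto simp: successively_append_iff)
  have lxP: "ety (last xs) \<in> TP" using xsP xne last_in_set by blast
  have edge: "ety (last xs) = pend P \<and> ety (hd ys) = pstart Q"
    using sc(3) lxP hy tP tQ dj by auto
  have ysQ: "\<forall>x\<in>set ys. x \<in> {x. ety x \<in> TQ}"
  proof (rule succ_stay[OF sc(2) _ yne])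
    fix a b assume "(ety a, ety b) \<in> trans_of (Seq P Q)" "a \<in> {x. ety x \<in> TQ}"
    then show "b \<in> {x. ety x \<in> TQ}" using tP tQ dj sP by auto
  qed (use edge sQ in auto)
  have scx: "successively (\<lambda>a b. (ety a, ety b) \<in> trans_of P) xs"
    using sc(1) by (rule successively_mono) (use xsP tQ dj sQ in auto)
  have scy: "successively (\<lambda>a b. (ety a, ety b) \<in> trans_of Q) ys"
    using sc(2) by (rule successively_mono) (use ysQ tP dj sP in fastforce)
  have "xs \<in> paths ety tm I P" using s sxy xne edge sw scx unfolding paths_def by auto
  moreover have "ys \<in> paths ety tm I Q" using s sxy yne edge sw scy unfolding paths_def by auto
  ultimately show "s \<in> {xs @ ys | xs ys. xs \<in> paths ety tm I P \<and> ys \<in> paths ety tm I Q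
                      \<and> sorted_wrt (\<lambda>a b. tm a < tm b) (xs @ ys)}" using sxy s(3) by blast
qed

lemma matches_paths: "wf_pat P \<Longrightarrow> matches ety tm I P = paths ety tm I P"
proof (induction P)
  case (Atom E) then show ?case by (simp add: paths_Atom)
next
  case (Plus P)
  then have "matches ety tm I P = paths ety tm I P" by (simp add: wf_pat_def)
  then show ?case using plus_cl_sub plus_cl_sup by auto
next
  case (Seq P Q)
  then have "matches ety tm I P = paths ety tm I P" "matches ety tm I Q = paths ety tm I Q"
    "set (pat_types P) \<inter> set (pat_types Q) = {}" by (auto simp: wf_pat_def)
  then show ?case by (simp add: paths_Seq)
qed

lemma sorted_distinct: "sorted_wrt (\<lambda>a b. (tm a::rat) < tm b) s \<Longrightarrow> distinct s"
  by (induction s) auto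

lemma subtrends_alt: "subtrends ety tm P I e = {s. s \<noteq> [] \<and> set s \<subseteq> set I \<and> last s = e \<and> ety (hd s) = pstart P
      \<and> sorted_wrt (\<lambda>a b. tm a < tm b) s \<and> successively (\<lambda>a b. (ety a, ety b) \<in> trans_of P) s}"
  unfolding subtrends_def successively_conv_nth predTypes_def by auto

lemma subtrends_fin: "finite (subtrends ety tm P I e)"
proof (rule finite_subset)
  show "subtrends ety tm P I e \<subseteq> {xs. set xs \<subseteq> set I \<and> length xs \<le> card (set I)}"
  proof
    fix s assume "s \<in> subtrends ety tm P I e"
    then have "set s \<subseteq> set I" "distinct s" unfolding subtrends_alt by (auto intro: sorted_distinct)
    then show "s \<in> {xs. set xs \<subseteq> set I \<and> length xs \<le> card (set I)}"
      using card_mono[of "set I" "set s"] distinct_card[of s] by auto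
  qed
qed (rule finite_lists_length_le, simp)

definition Prs where "Prs ety tm P I e = {p \<in> set I. ety p \<in> predTypes P (ety e) \<and> tm p < tm e}"

lemma subtrends_rec:
  assumes "e \<in> set I"
  shows "subtrends ety tm P I e = (if ety e = pstart P then {[e]} else {})
     \<union> (\<Union>p\<in>Prs ety tm P I e. (\<lambda>s. s @ [e]) ` subtrends ety tm P I p)"
proof (intro set_eqI iffI)
  fix s assume "s \<in> subtrends ety tm P I e"
  then have s: "s \<noteq> []" "set s \<subseteq> set I" "last s = e" "ety (hd s) = pstart P"
      "sorted_wrt (\<lambda>a b. tm a < tm b) s" "successively (\<lambda>a b. (ety a, ety b) \<in> trans_of P) s"
    unfolding subtrends_alt by auto
  obtain s' where s': "s = s' @ [e]" using s(1,3) by (metis append_butlast_last_id)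
  show "s \<in> (if ety e = pstart P then {[e]} else {})
     \<union> (\<Union>p\<in>Prs ety tm P I e. (\<lambda>s. s @ [e]) ` subtrends ety tm P I p)"
  proof (cases "s' = []")
    case True then show ?thesis using s s' by auto
  next
    case False
    have "sorted_wrt (\<lambda>a b. tm a < tm b) s'" "tm (last s') < tm e"
      using s(5) s' False by (auto simp: sorted_wrt_append)
    moreover have "successively (\<lambda>a b. (ety a, ety b) \<in> trans_of P) s'"
      "(ety (last s'), ety e) \<in> trans_of P"
      using s(6) s' False by (auto simp: successively_append_iff)
    moreover have "last s' \<in> set I" using s(2) s' False last_in_set by fastforce
    ultimately have "last s' \<in> Prs ety tm P I e" "s' \<in> subtrends ety tm P I (last s')"
      using s s' False unfolding Prs_def predTypes_def subtrends_alt by auto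
    then show ?thesis using s' by blast
  qed
next
  fix s assume "s \<in> (if ety e = pstart P then {[e]} else {})
     \<union> (\<Union>p\<in>Prs ety tm P I e. (\<lambda>s. s @ [e]) ` subtrends ety tm P I p)"
  then show "s \<in> subtrends ety tm P I e"
  proof (elim UnE)
    assume "s \<in> (if ety e = pstart P then {[e]} else {})"
    then show ?thesis using assms unfolding subtrends_alt by (auto split: if_splits)
  next
    assume "s \<in> (\<Union>p\<in>Prs ety tm P I e. (\<lambda>s. s @ [e]) ` subtrends ety tm P I p)"
    then obtain p s' where h: "p \<in> Prs ety tm P I e" "s' \<in> subtrends ety tm P I p" "s = s' @ [e]" by blast
    have s': "s' \<noteq> []" "set s' \<subseteq> set I" "last s' = p" "ety (hd s') = pstart P"
      "sorted_wrt (\<lambda>a b. tm a < tm b) s'" "successively (\<lambda>a b. (ety a, ety b) \<in> trans_of P) s'"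
      using h(2) unfolding subtrends_alt by auto
    have p: "tm p < tm e" "(ety p, ety e) \<in> trans_of P" using h(1) unfolding Prs_def predTypes_def by auto
    have "\<forall>x\<in>set s'. tm x < tm e" using sorted_le_last[OF s'(5)] s'(3) p(1) by fastforce
    then have so: "sorted_wrt (\<lambda>a b. tm a < tm b) (s' @ [e])"
      using s'(5) by (simp add: sorted_wrt_append)
    have su: "successively (\<lambda>a b. (ety a, ety b) \<in> trans_of P) (s' @ [e])"
      using s'(1,3,6) p(2) by (simp add: successively_append_iff)
    have hd: "hd (s' @ [e]) = hd s'" using s'(1) by simp
    have st: "set (s' @ [e]) \<subseteq> set I" using s'(2) assms by simp
    show ?thesis unfolding subtrends_alt h(3) using so su hd st s'(4) by simp
  qed
qed

lemma subtrends_card: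
  assumes "e \<in> set I"
  shows "card (subtrends ety tm P I e) = (if ety e = pstart P then 1 else 0)
     + (\<Sum>p\<in>Prs ety tm P I e. card (subtrends ety tm P I p))"
proof -
  have fin: "finite (Prs ety tm P I e)" unfolding Prs_def by simp
  have c1: "card (\<Union>p\<in>Prs ety tm P I e. (\<lambda>s. s @ [e]) ` subtrends ety tm P I p)
     = (\<Sum>p\<in>Prs ety tm P I e. card ((\<lambda>s. s @ [e]) ` subtrends ety tm P I p))"
  proof (rule card_UN_disjoint[OF fin])
    show "\<forall>i\<in>Prs ety tm P I e. finite ((\<lambda>s. s @ [e]) ` subtrends ety tm P I i)"
      by (simp add: subtrends_fin)
    show "\<forall>i\<in>Prs ety tm P I e. \<forall>j\<in>Prs ety tm P I e. i \<noteq> j \<longrightarrow>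
       (\<lambda>s. s @ [e]) ` subtrends ety tm P I i \<inter> (\<lambda>s. s @ [e]) ` subtrends ety tm P I j = {}"
      unfolding subtrends_alt by auto
  qed
  have c2: "card ((\<lambda>s. s @ [e]) ` subtrends ety tm P I p) = card (subtrends ety tm P I p)" for p
    by (rule card_image) (simp add: inj_on_def)
  have dis: "(if ety e = pstart P then {[e]} else {}) \<inter>
     (\<Union>p\<in>Prs ety tm P I e. (\<lambda>s. s @ [e]) ` subtrends ety tm P I p) = {}"
    unfolding subtrends_alt by auto
  have fU: "finite (\<Union>p\<in>Prs ety tm P I e. (\<lambda>s. s @ [e]) ` subtrends ety tm P I p)"
    using fin by (simp add: subtrends_fin)
  have "card (subtrends ety tm P I e) = card ((if ety e = pstart P then {[e]} else {})
     \<union> (\<Union>p\<in>Prs ety tm P I e. (\<lambda>s. s @ [e]) ` subtrends ety tm P I p))"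
    by (simp only: subtrends_rec[OF assms])
  also have "\<dots> = card (if ety e = pstart P then {[e]} else {})
     + card (\<Union>p\<in>Prs ety tm P I e. (\<lambda>s. s @ [e]) ` subtrends ety tm P I p)"
    by (rule card_Un_disjoint) (simp, rule fU, rule dis)
  also have "card (\<Union>p\<in>Prs ety tm P I e. (\<lambda>s. s @ [e]) ` subtrends ety tm P I p)
     = (\<Sum>p\<in>Prs ety tm P I e. card (subtrends ety tm P I p))" unfolding c1 c2 ..
  finally show ?thesis by simp
qed

lemma alg_inv:
  assumes es: "event_stream tm I"
  shows "pre @ rest = I \<Longrightarrow> (case foldl (alg_step ety tm P) ({}, (\<lambda>_. 0), 0) pre of (V, cnt, fc) \<Rightarrow>
     V = {e \<in> set pre. subtrends ety tm P I e \<noteq> {}} \<and> (\<forall>e\<in>V. cnt e = card (subtrends ety tm P I e))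
     \<and> fc = (\<Sum>e\<in>{e \<in> set pre. ety e = pend P}. card (subtrends ety tm P I e)))"
proof (induction pre arbitrary: rest rule: rev_induct)
  case Nil then show ?case by simp
next
  case (snoc x xs)
  let ?ST = "subtrends ety tm P I"
  obtain V cnt fc where st: "foldl (alg_step ety tm P) ({}, (\<lambda>_. 0), 0) xs = (V, cnt, fc)"
    by (cases "foldl (alg_step ety tm P) ({}, (\<lambda>_. 0), 0) xs") auto
  from snoc.IH[of "x # rest"] snoc.prems st have IH: "V = {e \<in> set xs. ?ST e \<noteq> {}}"
    "\<forall>e\<in>V. cnt e = card (?ST e)" "fc = (\<Sum>e\<in>{e \<in> set xs. ety e = pend P}. card (?ST e))" by auto
  have dI: "distinct I" and so: "sorted (map tm I)" using es unfolding event_stream_def by auto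
  have xI: "x \<in> set I" using snoc.prems by auto
  have xsI: "set xs \<subseteq> set I" using snoc.prems by auto
  have xnot: "x \<notin> set xs" using dI snoc.prems by auto
  have restge: "\<forall>y\<in>set rest. tm x \<le> tm y" using so snoc.prems[symmetric] by (simp add: sorted_append)
  have PrSub: "Prs ety tm P I x \<subseteq> set xs"
  proof
    fix p assume p: "p \<in> Prs ety tm P I x"
    then have "p \<in> set I" "tm p < tm x" unfolding Prs_def by auto
    then show "p \<in> set xs" using restge snoc.prems by force
  qed
  define Pr where "Pr = {p \<in> V. ety p \<in> predTypes P (ety x) \<and> tm p < tm x}"
  have PrEq: "Pr = {p \<in> Prs ety tm P I x. ?ST p \<noteq> {}}"
    unfolding Pr_def IH(1) using PrSub xsI unfolding Prs_def by auto
  have finPrs: "finite (Prs ety tm P I x)" unfolding Prs_def by simp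
  have sumEq: "(\<Sum>p\<in>Pr. cnt p) = (\<Sum>p\<in>Prs ety tm P I x. card (?ST p))"
  proof -
    have "(\<Sum>p\<in>Pr. cnt p) = (\<Sum>p\<in>Pr. card (?ST p))"
      using IH(2) unfolding Pr_def by simp
    also have "\<dots> = (\<Sum>p\<in>Prs ety tm P I x. card (?ST p))"
      by (rule sum.mono_neutral_left[OF finPrs]) (auto simp: PrEq)
    finally show ?thesis .
  qed
  define c where "c = (if ety x = pstart P then 1 else 0) + (\<Sum>p\<in>Pr. cnt p)"
  have cEq: "c = card (?ST x)" unfolding c_def sumEq subtrends_card[OF xI] by simp
  have condEq: "(ety x = pstart P \<or> Pr \<noteq> {}) \<longleftrightarrow> ?ST x \<noteq> {}"
  proof -
    have "?ST x \<noteq> {} \<longleftrightarrow> card (?ST x) \<noteq> 0" by (simp add: card_eq_0_iff subtrends_fin)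
    also have "\<dots> \<longleftrightarrow> ety x = pstart P \<or> (\<exists>p\<in>Prs ety tm P I x. card (?ST p) \<noteq> 0)"
      unfolding subtrends_card[OF xI] using sum_eq_0_iff[OF finPrs, of "\<lambda>p. card (?ST p)"] by auto
    also have "\<dots> \<longleftrightarrow> ety x = pstart P \<or> Pr \<noteq> {}"
    proof -
      have "card (?ST p) \<noteq> 0 \<longleftrightarrow> ?ST p \<noteq> {}" for p using subtrends_fin[of ety tm P I p] by simp
      then show ?thesis unfolding PrEq by blast
    qed
    finally show ?thesis by blast
  qed
  have fsum: "(\<Sum>e\<in>{e \<in> set (xs @ [x]). ety e = pend P}. card (?ST e))
      = fc + (if ety x = pend P then card (?ST x) else 0)"
  proof (cases "ety x = pend P")
    case True
    then have eq: "{e \<in> set (xs @ [x]). ety e = pend P} = insert x {e \<in> set xs. ety e = pend P}" by auto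
    have fin1: "finite {e \<in> set xs. ety e = pend P}" by simp
    have nin: "x \<notin> {e \<in> set xs. ety e = pend P}" using xnot by simp
    have si: "(\<Sum>e\<in>insert x {e \<in> set xs. ety e = pend P}. card (?ST e)) = card (?ST x) + (\<Sum>e\<in>{e \<in> set xs. ety e = pend P}. card (?ST e))"
      using sum.insert[OF fin1 nin] .
    have ie: "(if ety x = pend P then card (?ST x) else 0) = card (?ST x)" using True by simp
    show ?thesis unfolding eq IH(3) ie si by (rule add.commute)
  next
    case False
    then have eq: "{e \<in> set (xs @ [x]). ety e = pend P} = {e \<in> set xs. ety e = pend P}" by auto
    have ie: "(if ety x = pend P then card (?ST x) else 0) = 0" using False by (simp only: if_False)
    show ?thesis unfolding eq IH(3) ie by (rule add_0_right[symmetric])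
  qed
  have step: "foldl (alg_step ety tm P) ({}, (\<lambda>_. 0), 0) (xs @ [x]) =
     (if ety x = pstart P \<or> Pr \<noteq> {} then (insert x V, cnt(x := c), if ety x = pend P then fc + c else fc)
      else (V, cnt, fc))"
  proof -
    have "foldl (alg_step ety tm P) ({}, (\<lambda>_. 0), 0) (xs @ [x]) = alg_step ety tm P (V, cnt, fc) x"
      using st by simp
    also have "\<dots> = (if ety x = pstart P \<or> Pr \<noteq> {} then (insert x V, cnt(x := c), if ety x = pend P then fc + c else fc)
      else (V, cnt, fc))"
      unfolding alg_step_def Pr_def c_def by (simp only: prod.case Let_def)
    finally show ?thesis .
  qed
  show ?case
  proof (cases "?ST x = {}")
    case True
    then have "\<not> (ety x = pstart P \<or> Pr \<noteq> {})" using condEq by simp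
    then show ?thesis unfolding step using IH True fsum by auto
  next
    case False
    then have "ety x = pstart P \<or> Pr \<noteq> {}" using condEq by simp
    moreover have "\<forall>e\<in>V. e \<noteq> x" unfolding IH(1) using xnot by blast
    ultimately show ?thesis unfolding step using IH False fsum cEq by auto
  qed
qed

lemma paths_union: "paths ety tm I P = (\<Union>e\<in>{e \<in> set I. ety e = pend P}. subtrends ety tm P I e)"
proof (intro set_eqI iffI)
  fix s assume a: "s \<in> paths ety tm I P"
  then have ne: "s \<noteq> []" "set s \<subseteq> set I" "ety (last s) = pend P" unfolding paths_def by auto
  then have l: "last s \<in> {e \<in> set I. ety e = pend P}" using last_in_set by fastforce
  have "s \<in> subtrends ety tm P I (last s)" using a unfolding paths_def subtrends_alt by simp
  then show "s \<in> (\<Union>e\<in>{e \<in> set I. ety e = pend P}. subtrends ety tm P I e)" using l by (rule UN_I[rotated])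
next
  fix s assume "s \<in> (\<Union>e\<in>{e \<in> set I. ety e = pend P}. subtrends ety tm P I e)"
  then obtain e where "e \<in> set I" "ety e = pend P" "s \<in> subtrends ety tm P I e" by blast
  then show "s \<in> paths ety tm I P" unfolding paths_def subtrends_alt by simp
qed

theorem theorem4:
  fixes ety :: "'e \<Rightarrow> 't" and tm :: "'e \<Rightarrow> rat" and P :: "'t pat" and I :: "'e list"
  assumes "wf_pat P" and "event_stream tm I"
  shows "(\<forall>e \<in> fst (run_alg ety tm P I).
            fst (snd (run_alg ety tm P I)) e = card (subtrends ety tm P I e))
       \<and> snd (snd (run_alg ety tm P I)) = card (matches ety tm I P)"
proof -
  obtain V cnt fc where st: "run_alg ety tm P I = (V, cnt, fc)" by (cases "run_alg ety tm P I") auto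
  have inv: "V = {e \<in> set I. subtrends ety tm P I e \<noteq> {}}" "\<forall>e\<in>V. cnt e = card (subtrends ety tm P I e)"
     "fc = (\<Sum>e\<in>{e \<in> set I. ety e = pend P}. card (subtrends ety tm P I e))"
    using alg_inv[OF assms(2), of I "[]" ety P] st unfolding run_alg_def by auto
  have "card (matches ety tm I P) = (\<Sum>e\<in>{e \<in> set I. ety e = pend P}. card (subtrends ety tm P I e))"
    unfolding matches_paths[OF assms(1)] paths_union
    by (rule card_UN_disjoint) (simp, simp add: subtrends_fin, auto simp: subtrends_alt)
  then show ?thesis using inv st by simp
qed

end
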